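(* Let $X,Y$ be Hilbert spaces, $F:\mathrm{dom}(F)\subset X\to Y$, $y\in\mathrm{Ran}(F)$, $x^*\in\mathrm{dom}(F)$, and let $x^\dagger$ be an $x^*$-minimum-norm solution of $F(x)=y$. Suppose Assumption 1 holds. Let $A:=F'(x^\dagger)$, and suppose there is a sequence of positive numbers $\lambda_k\in\sigma(AA^* )$ with $\lambda_k\to0$. Suppose there is a constant $\tau>0$ such that for every sufficiently small $\delta>0$ and every $y^\delta\in Y$ with $\|y^\delta-y\|\le\delta$ a number $\alpha(\delta,y^\delta)>0$ and a Tikhonov minimizer $x^\delta_{\alpha(\delta,y^\delta)}$ are chosen with $\|F(x^\delta_{\alpha(\delta,y^\delta)})-y^\delta\|\le\tau\delta$. If $$\sup\left\{\|x^\delta_{\alpha(\delta,y^\delta)}-x^\dagger\|:\ \|y^\delta-y\|\le\delta\right\}=o(\delta^{1/2})\quad\text{as }\delta\to0,$$ then $x^\dagger=x^*$.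
   Context: An $x^*$-minimum-norm solution is a point $x^\dagger\in\mathrm{dom}(F)$ with $F(x^\dagger)=y$ and $\|x^\dagger-x^*\|=\min\{\|x-x^*\|: x\in\mathrm{dom}(F),\ F(x)=y\}$. For $\alpha>0$ and $y^\delta\in Y$, a Tikhonov minimizer $x_\alpha^\delta$ is any minimizer over $\mathrm{dom}(F)$ of $\|F(x)-y^\delta\|^2+\alpha\|x-x^*\|^2$ (assumed to exist). $B_\rho(x^\dagger)=\{x\in X:\|x-x^\dagger\|<\rho\}$. $\sigma(AA^* )$ denotes the spectrum of $AA^*$. Assumption 1: there is $\rho>0$ with $B_\rho(x^\dagger)\subset\mathrm{dom}(F)$, $F$ is Fréchet differentiable on $B_\rho(x^\dagger)$, and there is $\kappa_0\ge0$ such that for all $x,z\in B_\rho(x^\dagger)$ there is a bounded linear operator $R(x,z):X\to X$ with $F'(x)=F'(z)R(x,z)$ and $\|I-R(x,z)\|\le\kappa_0\|x-z\|$. *)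

theory Defs
  imports "HOL-Analysis.Analysis"
begin

definition min_norm_solution ::
  "'a::real_normed_vector set \<Rightarrow> ('a \<Rightarrow> 'b) \<Rightarrow> 'b \<Rightarrow> 'a \<Rightarrow> 'a \<Rightarrow> bool" where
  "min_norm_solution D F y xs xd \<longleftrightarrow>
     xd \<in> D \<and> F xd = y \<and> (\<forall>x\<in>D. F x = y \<longrightarrow> norm (xd - xs) \<le> norm (x - xs))"

definition tikhonov_minimizer ::
  "'a::real_normed_vector set \<Rightarrow> ('a \<Rightarrow> 'b::real_normed_vector) \<Rightarrow> 'a \<Rightarrow> real \<Rightarrow> 'b \<Rightarrow> 'a \<Rightarrow> bool" where
  "tikhonov_minimizer D F xs \<alpha> yd x \<longleftrightarrow>
     x \<in> D \<and> (\<forall>z\<in>D. (norm (F x - yd))\<^sup>2 + \<alpha> * (norm (x - xs))\<^sup>2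
                       \<le> (norm (F z - yd))\<^sup>2 + \<alpha> * (norm (z - xs))\<^sup>2)"

definition assumption1 ::
  "'a::real_normed_vector set \<Rightarrow> ('a \<Rightarrow> 'b::real_normed_vector) \<Rightarrow> ('a \<Rightarrow> ('a \<Rightarrow>\<^sub>L 'b)) \<Rightarrow> 'a \<Rightarrow> bool" where
  "assumption1 D F F' xd \<longleftrightarrow>
     (\<exists>\<rho>>0. ball xd \<rho> \<subseteq> D \<and>
        (\<forall>x\<in>ball xd \<rho>. (F has_derivative blinfun_apply (F' x)) (at x)) \<and>
        (\<exists>\<kappa>0\<ge>0. \<forall>x\<in>ball xd \<rho>. \<forall>z\<in>ball xd \<rho>.
            \<exists>R::'a \<Rightarrow>\<^sub>L 'a. F' x = F' z o\<^sub>L R \<and> norm (id_blinfun - R) \<le> \<kappa>0 * norm (x - z)))"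

definition op_spectrum :: "('b::real_normed_vector \<Rightarrow> 'b) \<Rightarrow> real set" where
  "op_spectrum T = {l. \<not> (\<exists>S. bounded_linear S \<and> (\<forall>y. S (T y - l *\<^sub>R y) = y)
                                  \<and> (\<forall>y. T (S y) - l *\<^sub>R S y = y))}"

end

theory Submission
  imports Defs
begin


lemma proj_exists:
  fixes M :: "'a::{real_inner,complete_space} set"
  assumes sub: "subspace M" and cl: "closed M"
  shows "\<exists>p\<in>M. \<forall>m\<in>M. (y - p) \<bullet> m = 0"
proof -
  define f where "f m = (norm (y - m))\<^sup>2" for m
  define D where "D = Inf (f ` M)"
  have M0: "0 \<in> M" using sub by (simp add: subspace_0)
  have bdd: "bdd_below (f ` M)" by (rule bdd_belowI[of _ 0]) (auto simp: f_def)
  have Dle: "D \<le> f m" if "m \<in> M" for m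
    unfolding D_def using bdd that by (simp add: cInf_lower)
  have "\<exists>m\<in>M. f m < D + 1 / real (Suc n)" for n
  proof -
    have "Inf (f ` M) < D + 1 / real (Suc n)" unfolding D_def by simp
    then obtain z where "z \<in> f ` M" "z < D + 1 / real (Suc n)"
      using cInf_lessD[of "f ` M"] M0 by blast
    then show ?thesis by auto
  qed
  then obtain s where sM: "\<And>n. s n \<in> M" and sl: "\<And>n. f (s n) < D + 1 / real (Suc n)"
    by metis
  have par: "(norm (a - b))\<^sup>2 \<le> 2 * f a + 2 * f b - 4 * D" if "a \<in> M" "b \<in> M" for a b
  proof -
    have mid: "(1/2) *\<^sub>R (a + b) \<in> M" using sub that
      by (simp add: subspace_add subspace_scale)
    have id: "(norm (a - b))\<^sup>2 = 2 * f a + 2 * f b - 4 * f ((1/2) *\<^sub>R (a + b))"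
      unfolding f_def power2_norm_eq_inner
      by (simp add: algebra_simps inner_add_left inner_add_right inner_diff_left inner_diff_right inner_commute)
    show ?thesis using id Dle[OF mid] by linarith
  qed
  have "Cauchy s"
  proof (rule metric_CauchyI)
    fix e :: real assume e: "e > 0"
    obtain N :: nat where N: "4 / e\<^sup>2 < real N" using reals_Archimedean2 by blast
    have "dist (s m) (s n) < e" if "m \<ge> N" "n \<ge> N" for m n
    proof -
      have "(norm (s m - s n))\<^sup>2 \<le> 2 * f (s m) + 2 * f (s n) - 4 * D" by (rule par[OF sM sM])
      also have "\<dots> < 2 / real (Suc m) + 2 / real (Suc n)" using sl[of m] sl[of n] by simp
      also have "\<dots> \<le> 4 / real (Suc N)"
      proof -
        have "2 / real (Suc m) \<le> 2 / real (Suc N)" using that by (simp add: frac_le)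
        moreover have "2 / real (Suc n) \<le> 2 / real (Suc N)" using that by (simp add: frac_le)
        ultimately show ?thesis by simp
      qed
      also have "\<dots> < e\<^sup>2"
      proof -
        have "4 < e\<^sup>2 * real N" using N e by (simp add: field_simps)
        hence "4 < e\<^sup>2 * real (Suc N)" using e by (smt (verit) of_nat_Suc mult_left_mono zero_le_power2)
        thus ?thesis by (simp add: field_simps)
      qed
      finally have "(norm (s m - s n))\<^sup>2 < e\<^sup>2" .
      hence "norm (s m - s n) < e" using e by (simp add: power_less_imp_less_base)
      thus ?thesis by (simp add: dist_norm)
    qed
    thus "\<exists>N. \<forall>m\<ge>N. \<forall>n\<ge>N. dist (s m) (s n) < e" by blast
  qed
  then obtain p where lim: "s \<longlonglongrightarrow> p" using Cauchy_convergent_iff convergent_def by blast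
  have pM: "p \<in> M" using cl sM lim closed_sequentially by blast
  have fp: "f p \<le> D"
  proof -
    have c: "(\<lambda>n. f (s n)) \<longlonglongrightarrow> f p" unfolding f_def
      by (intro tendsto_intros lim)
    have c2: "(\<lambda>n. D + 1 / real (Suc n)) \<longlonglongrightarrow> D + 0"
      by (intro tendsto_intros LIMSEQ_inverse_real_of_nat[unfolded inverse_eq_divide])
    show ?thesis using c c2[simplified] sl
      by (intro LIMSEQ_le[OF c c2[simplified]]) (auto intro: less_imp_le)
  qed
  have "(y - p) \<bullet> m = 0" if mM: "m \<in> M" for m
  proof (cases "m = 0")
    case True then show ?thesis by simp
  next
    case False
    define c where "c = (y - p) \<bullet> m"
    define t where "t = c / (m \<bullet> m)"
    have mm: "m \<bullet> m > 0" using False by simp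
    have zM: "p + t *\<^sub>R m \<in> M" using sub pM mM by (simp add: subspace_add subspace_scale)
    have "f (p + t *\<^sub>R m) = f p - 2 * t * c + t\<^sup>2 * (m \<bullet> m)"
      unfolding f_def power2_norm_eq_inner c_def
      by (simp add: algebra_simps inner_add_left inner_add_right inner_diff_left inner_diff_right inner_commute power2_eq_square)
    also have "\<dots> = f p - c\<^sup>2 / (m \<bullet> m)" unfolding t_def using mm
      by (simp add: field_simps power2_eq_square)
    finally have "f p - c\<^sup>2 / (m \<bullet> m) \<ge> D" using Dle[OF zM] by simp
    hence "c\<^sup>2 / (m \<bullet> m) \<le> 0" using fp by linarith
    hence "c\<^sup>2 \<le> 0" using mm by (simp add: divide_le_0_iff)
    thus ?thesis unfolding c_def by simp
  qed
  thus ?thesis using pM by blast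
qed




lemma riesz:
  fixes \<phi> :: "'a::{real_inner,complete_space} \<Rightarrow> real"
  assumes bl: "bounded_linear \<phi>"
  shows "\<exists>w. \<forall>x. \<phi> x = x \<bullet> w"
proof (cases "\<forall>x. \<phi> x = 0")
  case True then show ?thesis by (intro exI[of _ 0]) simp
next
  case False
  then obtain z where z: "\<phi> z \<noteq> 0" by blast
  interpret bounded_linear \<phi> by (rule bl)
  define K where "K = \<phi> -` {0}"
  have subK: "subspace K" unfolding K_def subspace_def by (auto simp: add scale zero)
  have clK: "closed K" unfolding K_def by (intro closed_vimage continuous_on_id) (auto intro: continuous_on)
  obtain p where pK: "p \<in> K" and orth: "\<forall>m\<in>K. (z - p) \<bullet> m = 0"
    using proj_exists[OF subK clK, of z] by blast
  define q where "q = z - p"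
  have pq: "\<phi> q = \<phi> z" using pK unfolding q_def K_def by (simp add: diff)
  have qn: "q \<bullet> q \<noteq> 0" using pq z by auto
  have "\<phi> x = x \<bullet> ((\<phi> q / (q \<bullet> q)) *\<^sub>R q)" for x
  proof -
    have "x - (\<phi> x / \<phi> q) *\<^sub>R q \<in> K" unfolding K_def using pq z by (simp add: diff scale)
    hence "q \<bullet> (x - (\<phi> x / \<phi> q) *\<^sub>R q) = 0" using orth unfolding q_def by blast
    hence "q \<bullet> x = (\<phi> x / \<phi> q) * (q \<bullet> q)" by (simp add: inner_diff_right)
    thus ?thesis using qn pq z by (simp add: field_simps inner_commute)
  qed
  thus ?thesis by blast
qed

lemma adjoint_props:
  fixes A :: "'a::{real_inner,complete_space} \<Rightarrow> 'b::real_inner"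
  assumes bl: "bounded_linear A"
  shows "\<forall>x y. A x \<bullet> y = x \<bullet> adjoint A y"
proof -
  have "\<exists>w. \<forall>x. A x \<bullet> y = x \<bullet> w" for y
    by (rule riesz) (intro bounded_linear_inner_left_comp bl)
  then obtain g where "\<forall>x y. A x \<bullet> y = x \<bullet> g y" by metis
  then show ?thesis unfolding adjoint_def by (rule someI[where P="\<lambda>f'. \<forall>x y. A x \<bullet> y = x \<bullet> f' y"])
qed

lemma adjoint_norm:
  fixes A :: "'a::{real_inner,complete_space} \<Rightarrow>\<^sub>L 'b::real_inner"
  shows "norm (adjoint (blinfun_apply A) y) \<le> norm A * norm y"
proof -
  let ?B = "adjoint (blinfun_apply A)"
  have ad: "\<forall>x y. A x \<bullet> y = x \<bullet> ?B y" by (rule adjoint_props) (rule blinfun.bounded_linear_right)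
  have "(norm (?B y))\<^sup>2 = A (?B y) \<bullet> y" using ad by (simp add: power2_norm_eq_inner)
  also have "\<dots> \<le> norm (A (?B y)) * norm y" by (rule norm_cauchy_schwarz[THEN order_trans]) auto
  also have "\<dots> \<le> norm A * norm (?B y) * norm y" by (simp add: norm_blinfun mult_right_mono)
  finally have h: "(norm (?B y))\<^sup>2 \<le> norm A * norm y * norm (?B y)" by (simp add: algebra_simps)
  show ?thesis
  proof (cases "norm (?B y) = 0")
    case True then show ?thesis by simp
  next
    case False
    hence "norm (?B y) > 0" by simp
    thus ?thesis using h by (simp add: power2_eq_square)
  qed
qed

lemma adjoint_lin:
  fixes A :: "'a::{real_inner,complete_space} \<Rightarrow>\<^sub>L 'b::real_inner"
  shows "bounded_linear (adjoint (blinfun_apply A))"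
proof -
  let ?B = "adjoint (blinfun_apply A)"
  have ad: "\<forall>x y. A x \<bullet> y = x \<bullet> ?B y" by (rule adjoint_props) (rule blinfun.bounded_linear_right)
  have eq: "u = v" if "\<And>x. x \<bullet> u = x \<bullet> v" for u v :: 'a
  proof -
    have "(u - v) \<bullet> (u - v) = 0" using that[of "u - v"] by (simp add: inner_diff_right)
    thus ?thesis by simp
  qed
  have add: "?B (y1 + y2) = ?B y1 + ?B y2" for y1 y2
    by (rule eq) (metis ad inner_add_right)
  have sc: "?B (r *\<^sub>R y) = r *\<^sub>R ?B y" for r y
    by (rule eq) (metis ad inner_scaleR_right)
  show ?thesis
    by (rule bounded_linear_intro[of _ "norm A"]) (auto simp: add sc, metis adjoint_norm mult.commute)
qed




lemma not_spec:
  fixes T :: "'b::{real_inner,complete_space} \<Rightarrow> 'b"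
  assumes bl: "bounded_linear T" and sym: "\<And>u v. T u \<bullet> v = u \<bullet> T v"
    and c: "c > 0" and below: "\<And>v. c * norm v \<le> norm (T v - \<mu> *\<^sub>R v)"
  shows "\<mu> \<notin> op_spectrum T"
proof -
  define L where "L v = T v - \<mu> *\<^sub>R v" for v
  have blL: "bounded_linear L" unfolding L_def
    by (intro bounded_linear_sub bl bounded_linear_scaleR_right bounded_linear_ident)
  interpret L: bounded_linear L by (rule blL)
  have symL: "L u \<bullet> v = u \<bullet> L v" for u v
    unfolding L_def by (simp add: inner_diff_left inner_diff_right sym)
  have belowL: "c * norm v \<le> norm (L v)" for v unfolding L_def by (rule below)
  have inj: "L u = L v \<Longrightarrow> u = v" for u v
  proof -
    assume "L u = L v"
    hence "L (u - v) = 0" by (simp add: L.diff)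
    hence "c * norm (u - v) \<le> 0" using belowL[of "u - v"] by simp
    thus "u = v" using c by (simp add: mult_le_0_iff)
  qed
  have "complete (L ` UNIV)"
    by (rule complete_isometric_image[OF c subspace_UNIV blL]) (auto simp: belowL complete_UNIV)
  hence cl: "closed (range L)" by (simp add: complete_eq_closed)
  have sub: "subspace (range L)" by (rule linear_subspace_image[OF L.linear subspace_UNIV])
  have surj: "y \<in> range L" for y
  proof -
    obtain p where p: "p \<in> range L" and orth: "\<forall>m\<in>range L. (y - p) \<bullet> m = 0"
      using proj_exists[OF sub cl, of y] by blast
    define z where "z = y - p"
    have "z \<bullet> L (L z) = 0" using orth unfolding z_def by blast
    hence "L (L z) \<bullet> z = 0" by (simp add: inner_commute)
    hence "L z \<bullet> L z = 0" by (simp add: symL)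
    hence "L z = 0" by simp
    hence "z = 0" using inj[of z 0] by simp
    thus ?thesis using p unfolding z_def by simp
  qed
  define S where "S y = (SOME v. L v = y)" for y
  have LS: "L (S y) = y" for y unfolding S_def using surj[of y] by (metis (mono_tags) someI_ex rangeE)
  have SL: "S (L v) = v" for v using LS[of "L v"] inj by blast
  have blS: "bounded_linear S"
  proof (rule bounded_linear_intro[of _ "1 / c"])
    show "S (x + y) = S x + S y" for x y by (rule inj) (simp add: LS L.add)
    show "S (r *\<^sub>R x) = r *\<^sub>R S x" for r x by (rule inj) (simp add: LS L.scaleR)
    show "norm (S x) \<le> norm x * (1 / c)" for x
      using belowL[of "S x"] c by (simp add: LS field_simps)
  qed
  have "\<forall>y. S (T y - \<mu> *\<^sub>R y) = y" using SL unfolding L_def by simp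
  moreover have "\<forall>y. T (S y) - \<mu> *\<^sub>R S y = y" using LS unfolding L_def by simp
  ultimately show ?thesis unfolding op_spectrum_def using blS by blast
qed

lemma spec_approx:
  fixes T :: "'b::{real_inner,complete_space} \<Rightarrow> 'b"
  assumes bl: "bounded_linear T" and sym: "\<And>u v. T u \<bullet> v = u \<bullet> T v"
    and mu: "\<mu> \<in> op_spectrum T" and c: "c > 0"
  shows "\<exists>v. norm v = 1 \<and> norm (T v - \<mu> *\<^sub>R v) < c"
proof (rule ccontr)
  assume H: "\<not> ?thesis"
  interpret T: bounded_linear T by (rule bl)
  have "c * norm v \<le> norm (T v - \<mu> *\<^sub>R v)" for v
  proof (cases "v = 0")
    case True then show ?thesis by (simp add: T.zero)
  next
    case False
    define u where "u = (1 / norm v) *\<^sub>R v"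
    have "norm u = 1" using False unfolding u_def by simp
    hence "c \<le> norm (T u - \<mu> *\<^sub>R u)" using H by force
    also have "T u - \<mu> *\<^sub>R u = (1 / norm v) *\<^sub>R (T v - \<mu> *\<^sub>R v)"
      unfolding u_def by (simp add: T.scaleR algebra_simps)
    finally have "c \<le> norm (T v - \<mu> *\<^sub>R v) / norm v" by simp
    thus ?thesis using False by (simp add: field_simps)
  qed
  thus False using not_spec[OF bl sym c] mu by blast
qed




lemma tik_opt:
  fixes F :: "'a::real_inner \<Rightarrow> 'b::real_inner"
  assumes tm: "tikhonov_minimizer D F xs \<alpha> yd x" and r: "r > 0" and bD: "ball x r \<subseteq> D"
    and deriv: "(F has_derivative Fx) (at x)"
  shows "Fx h \<bullet> (F x - yd) + \<alpha> * (h \<bullet> (x - xs)) = 0"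
proof -
  define g where "g z = (F z - yd) \<bullet> (F z - yd) + \<alpha> * ((z - xs) \<bullet> (z - xs))" for z
  have gd: "(g has_derivative (\<lambda>h. Fx h \<bullet> (F x - yd) + (F x - yd) \<bullet> Fx h + \<alpha> * (h \<bullet> (x - xs) + (x - xs) \<bullet> h))) (at x)"
    unfolding g_def by (auto intro!: derivative_eq_intros deriv)
  have mn: "\<forall>z\<in>D. g x \<le> g z" using tm unfolding tikhonov_minimizer_def g_def
    by (simp add: power2_norm_eq_inner)
  have ev: "eventually (\<lambda>z. g x \<le> g z) (at x)"
    unfolding eventually_at
  proof (intro exI[of _ r] conjI ballI impI)
    fix z assume "z \<noteq> x \<and> dist z x < r"
    hence "z \<in> ball x r" by (simp add: dist_commute)
    hence "z \<in> D" using bD by blast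
    thus "g x \<le> g z" using mn by blast
  qed (simp add: r)
  have "(\<lambda>h. Fx h \<bullet> (F x - yd) + (F x - yd) \<bullet> Fx h + \<alpha> * (h \<bullet> (x - xs) + (x - xs) \<bullet> h)) = (\<lambda>h. 0)"
    by (rule has_derivative_local_min[OF gd ev])
  hence "Fx h \<bullet> (F x - yd) + (F x - yd) \<bullet> Fx h + \<alpha> * (h \<bullet> (x - xs) + (x - xs) \<bullet> h) = 0"
    by meson
  thus ?thesis by (simp add: inner_commute algebra_simps)
qed

lemma lin_bound:
  fixes F :: "'a::real_normed_vector \<Rightarrow> 'b::real_normed_vector"
  assumes rho: "norm (x - xd) < \<rho>"
    and der: "\<And>z. z \<in> ball xd \<rho> \<Longrightarrow> (F has_derivative blinfun_apply (F' z)) (at z)"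
    and bnd: "\<And>z. z \<in> cball xd (norm (x - xd)) \<Longrightarrow> norm (F' z - F' xd) \<le> Bd"
  shows "norm (F x - F xd - F' xd (x - xd)) \<le> norm (x - xd) * Bd"
proof -
  let ?S = "cball xd (norm (x - xd))"
  have sub: "?S \<subseteq> ball xd \<rho>" using rho by (auto simp: dist_norm)
  have "norm (F x - F xd - blinfun_apply (F' xd) (x - xd)) \<le> norm (x - xd) * Bd"
  proof (rule differentiable_bound_linearization[where S = ?S and f' = "\<lambda>z. blinfun_apply (F' z)"])
    show "xd + t *\<^sub>R (x - xd) \<in> ?S" if "t \<in> {0..1}" for t
      using that by (auto simp: dist_norm mult_left_le_one_le)
    show "(F has_derivative blinfun_apply (F' z)) (at z within ?S)" if "z \<in> ?S" for z
    proof -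
      have "z \<in> ball xd \<rho>" using sub that by blast
      thus ?thesis using der has_derivative_at_withinI by blast
    qed
    show "onorm (blinfun_apply (F' z) - blinfun_apply (F' xd)) \<le> Bd" if "z \<in> ?S" for z
    proof -
      have "onorm (blinfun_apply (F' z) - blinfun_apply (F' xd)) = norm (F' z - F' xd)"
        by (simp add: norm_blinfun.rep_eq minus_blinfun.rep_eq fun_diff_def)
      thus ?thesis using bnd[OF that] by simp
    qed
    show "xd \<in> ?S" by simp
  qed
  thus ?thesis by simp
qed




lemma R_bound:
  fixes R :: "'a::real_normed_vector \<Rightarrow>\<^sub>L 'a"
  shows "norm (R h - h) \<le> norm (id_blinfun - R) * norm h"
proof -
  have "R h - h = - ((id_blinfun - R) h)" by (simp add: minus_blinfun.rep_eq)
  hence "norm (R h - h) = norm ((id_blinfun - R) h)" by simp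
  also have "\<dots> \<le> norm (id_blinfun - R) * norm h" by (rule norm_blinfun)
  finally show ?thesis .
qed

lemma abs_inner_le: "\<bar>u \<bullet> v\<bar> \<le> norm u * norm v" for u v :: "'a::real_inner"
  by (rule Cauchy_Schwarz_ineq2)

theorem theorem2p2:
  fixes D :: "'a::{real_inner, complete_space} set"
    and F :: "'a \<Rightarrow> 'b::{real_inner, complete_space}"
    and F' :: "'a \<Rightarrow> ('a \<Rightarrow>\<^sub>L 'b)"
    and y :: 'b and xs xd :: 'a
    and lam :: "nat \<Rightarrow> real" and \<tau> :: real
    and alpha :: "real \<Rightarrow> 'b \<Rightarrow> real" and xr :: "real \<Rightarrow> 'b \<Rightarrow> 'a"
  assumes "y \<in> F ` D" and "xs \<in> D"
    and "min_norm_solution D F y xs xd"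
    and "assumption1 D F F' xd"
    and "\<forall>k. lam k > 0 \<and> lam k \<in> op_spectrum (blinfun_apply (F' xd) \<circ> adjoint (blinfun_apply (F' xd)))"
    and "lam \<longlonglongrightarrow> 0"
    and "\<tau> > 0"
    and "\<exists>\<delta>0>0. \<forall>\<delta> yd. 0 < \<delta> \<and> \<delta> < \<delta>0 \<and> norm (yd - y) \<le> \<delta> \<longrightarrow>
            alpha \<delta> yd > 0 \<and> tikhonov_minimizer D F xs (alpha \<delta> yd) yd (xr \<delta> yd)
            \<and> norm (F (xr \<delta> yd) - yd) \<le> \<tau> * \<delta>"
    and "\<forall>\<epsilon>>0. \<exists>\<delta>1>0. \<forall>\<delta> yd. 0 < \<delta> \<and> \<delta> < \<delta>1 \<and> norm (yd - y) \<le> \<delta> \<longrightarrow>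
            norm (xr \<delta> yd - xd) \<le> \<epsilon> * sqrt \<delta>"
  shows "xd = xs"
proof (rule ccontr)
  assume neq: "xd \<noteq> xs"
  note mns = assms(3)[unfolded min_norm_solution_def]
  have Fxd: "F xd = y" using mns by blast
  obtain \<rho> \<kappa>0 where rho: "\<rho> > 0" and bD: "ball xd \<rho> \<subseteq> D"
    and der: "\<And>x. x \<in> ball xd \<rho> \<Longrightarrow> (F has_derivative blinfun_apply (F' x)) (at x)"
    and k0: "\<kappa>0 \<ge> 0"
    and Rp: "\<And>x z. x \<in> ball xd \<rho> \<Longrightarrow> z \<in> ball xd \<rho> \<Longrightarrow>
        \<exists>R::'a \<Rightarrow>\<^sub>L 'a. F' x = F' z o\<^sub>L R \<and> norm (id_blinfun - R) \<le> \<kappa>0 * norm (x - z)"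
    using assms(4) unfolding assumption1_def by metis
  define A where "A = F' xd"
  define B where "B = adjoint (blinfun_apply A)"
  define T where "T = blinfun_apply A \<circ> B"
  have adj: "\<And>u z. A u \<bullet> z = u \<bullet> B z" unfolding B_def
    using adjoint_props[OF blinfun.bounded_linear_right] by blast
  have blB: "bounded_linear B" unfolding B_def by (rule adjoint_lin)
  have blT: "bounded_linear T" unfolding T_def o_def
    by (rule bounded_linear_compose[OF blinfun.bounded_linear_right blB])
  have symT: "T u \<bullet> z = u \<bullet> T z" for u z
    unfolding T_def o_def by (metis adj inner_commute)
  have spec: "\<And>k. lam k > 0 \<and> lam k \<in> op_spectrum T"
    using assms(5) unfolding T_def B_def A_def by blast
  define e where "e = xd - xs"
  define E where "E = norm e"
  have Epos: "E > 0" using neq unfolding E_def e_def by simp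
  define a where "a = norm A"
  have a0: "a \<ge> 0" unfolding a_def by simp
  define K where "K = a * \<kappa>0"
  have K0: "K \<ge> 0" unfolding K_def using a0 k0 by simp
  define C1 where "C1 = 4 * a * \<tau> / E"
  have C10: "C1 \<ge> 0" unfolding C1_def using a0 assms(7) Epos by simp
  define M where "M = 2 * (1 + C1) + K + 2 * a * \<kappa>0 * \<tau>"
  have M0: "M \<ge> 0" unfolding M_def using C10 K0 a0 k0 assms(7) by simp
  define \<epsilon> where "\<epsilon> = 1 / (2 * (M + 1))"
  have eps0: "\<epsilon> > 0" unfolding \<epsilon>_def using M0 by simp
  have eps1: "\<epsilon> \<le> 1/2" unfolding \<epsilon>_def using M0 by (simp add: field_simps)
  have epsM: "\<epsilon> * M < 1/2" unfolding \<epsilon>_def using M0 by (simp add: field_simps)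
  obtain \<delta>0 where d0: "\<delta>0 > 0" and H8: "\<And>\<delta> yd. 0 < \<delta> \<Longrightarrow> \<delta> < \<delta>0 \<Longrightarrow> norm (yd - y) \<le> \<delta> \<Longrightarrow>
            alpha \<delta> yd > 0 \<and> tikhonov_minimizer D F xs (alpha \<delta> yd) yd (xr \<delta> yd)
            \<and> norm (F (xr \<delta> yd) - yd) \<le> \<tau> * \<delta>"
    using assms(8) by metis
  obtain \<delta>1 where d1: "\<delta>1 > 0" and H9: "\<And>\<delta> yd. 0 < \<delta> \<Longrightarrow> \<delta> < \<delta>1 \<Longrightarrow> norm (yd - y) \<le> \<delta> \<Longrightarrow>
            norm (xr \<delta> yd - xd) \<le> \<epsilon> * sqrt \<delta>"
    using assms(9) eps0 by metis
  define \<beta> where "\<beta> = min (min \<delta>0 \<delta>1) (min (\<rho>\<^sup>2) (min ((E/2)\<^sup>2) (1 / (\<kappa>0\<^sup>2 + 1))))"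
  have beta0: "\<beta> > 0" unfolding \<beta>_def using d0 d1 rho Epos by (simp add: add_nonneg_pos)
  obtain k where lk: "lam k < \<beta>"
  proof -
    have "eventually (\<lambda>k. dist (lam k) 0 < \<beta>) sequentially"
      using assms(6) beta0 by (rule tendstoD)
    then obtain k where "dist (lam k) 0 < \<beta>" by (meson eventually_sequentially order_refl)
    then show ?thesis using that spec[of k] by (simp add: dist_real_def)
  qed
  define lm where "lm = lam k"
  have l0: "lm > 0" and lspec: "lm \<in> op_spectrum T" using spec[of k] unfolding lm_def by auto
  have lb: "lm < \<beta>" using lk unfolding lm_def .
  define q where "q = sqrt lm"
  have q0: "q > 0" unfolding q_def using l0 by simp
  have qq: "q * q = lm" unfolding q_def using l0 by simp
  have ld0: "lm < \<delta>0" and ld1: "lm < \<delta>1" using lb unfolding \<beta>_def by auto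
  have qrho: "q < \<rho>"
  proof -
    have "lm < \<rho>\<^sup>2" using lb unfolding \<beta>_def by auto
    thus ?thesis unfolding q_def using rho by (simp add: real_sqrt_less_iff real_less_lsqrt)
  qed
  have qE: "q \<le> E / 2"
  proof -
    have "lm \<le> (E/2)\<^sup>2" using lb unfolding \<beta>_def by auto
    moreover have "0 \<le> E / 2" using Epos by simp
    ultimately show ?thesis unfolding q_def by (rule real_le_lsqrt[rotated])
  qed
  have kq: "\<kappa>0 * q \<le> 1"
  proof -
    have "lm < 1 / (\<kappa>0\<^sup>2 + 1)" using lb unfolding \<beta>_def by auto
    hence "lm * (\<kappa>0\<^sup>2 + 1) < 1" by (simp add: field_simps add_pos_nonneg)
    hence "\<kappa>0 * \<kappa>0 * lm \<le> 1" using l0 by (simp add: power2_eq_square algebra_simps)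
    hence "(\<kappa>0 * q) * (\<kappa>0 * q) \<le> 1 * 1" using qq by (simp add: algebra_simps)
    hence "(\<kappa>0 * q)\<^sup>2 \<le> 1\<^sup>2" by (simp add: power2_eq_square)
    thus ?thesis by (rule power2_le_imp_le) simp
  qed

  define c where "c = lm / (2 * \<tau> + 2)"
  have c0: "c > 0" unfolding c_def using l0 assms(7) by simp
  obtain v where v1: "norm v = 1" and vT: "norm (T v - lm *\<^sub>R v) < c"
    using spec_approx[OF blT symT lspec c0] by blast
  define \<eta> where "\<eta> = norm (T v - lm *\<^sub>R v)"
  have eta_tau: "\<eta> * \<tau> < lm / 2"
  proof -
    have "\<eta> * \<tau> \<le> c * \<tau>" using vT assms(7) unfolding \<eta>_def by simp
    also have "c * \<tau> < lm / 2" unfolding c_def using l0 assms(7) by (simp add: field_simps)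
    finally show ?thesis .
  qed
  have eta_l: "\<eta> \<le> lm"
  proof -
    have "c \<le> lm" unfolding c_def using l0 assms(7) by (simp add: field_simps)
    thus ?thesis using vT unfolding \<eta>_def by simp
  qed
  define w where "w = B v"
  have Tv: "T v = A w" unfolding T_def w_def by simp
  have nw: "norm w \<le> 2 * q"
  proof -
    have "(norm w)\<^sup>2 = T v \<bullet> v" unfolding Tv power2_norm_eq_inner w_def by (simp add: adj)
    also have "\<dots> \<le> norm (T v) * norm v" using abs_inner_le[of "T v" v] by linarith
    also have "\<dots> = norm (T v)" using v1 by simp
    also have "\<dots> \<le> norm (T v - lm *\<^sub>R v) + norm (lm *\<^sub>R v)" using norm_triangle_ineq[of "T v - lm *\<^sub>R v" "lm *\<^sub>R v"] by simp
    also have "\<dots> \<le> 2 * lm" using eta_l l0 v1 unfolding \<eta>_def by simp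
    also have "\<dots> \<le> (2 * q)\<^sup>2" using qq l0 by (simp add: power2_eq_square)
    finally have "(norm w)\<^sup>2 \<le> (2 * q)\<^sup>2" .
    thus ?thesis by (rule power2_le_imp_le) (use q0 in simp)
  qed
  define s :: real where "s = (if w \<bullet> e \<le> 0 then 1 else -1)"
  have s2: "s * s = 1" unfolding s_def by simp
  have swe: "s * (w \<bullet> e) \<le> 0" unfolding s_def by simp
  define yd where "yd = y + (s * lm) *\<^sub>R v"
  have nyd: "norm (yd - y) = lm" unfolding yd_def using v1 l0 s2 by (auto simp: s_def)
  define \<alpha> where "\<alpha> = alpha lm yd"
  define x where "x = xr lm yd"
  have alpha0: "\<alpha> > 0" and tm: "tikhonov_minimizer D F xs \<alpha> yd x"
    and res: "norm (F x - yd) \<le> \<tau> * lm"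
    using H8[OF l0 ld0] nyd unfolding \<alpha>_def x_def by auto
  have dx: "norm (x - xd) \<le> \<epsilon> * q" using H9[OF l0 ld1] nyd unfolding x_def q_def by auto
  define d where "d = x - xd"
  define nd where "nd = norm d"
  have nd_eq: "nd \<le> \<epsilon> * q" using dx unfolding nd_def d_def .
  have nd0: "nd \<ge> 0" unfolding nd_def by simp
  have nd_q: "nd \<le> q"
  proof -
    have "\<epsilon> * q \<le> 1 * q" using eps1 q0 by (intro mult_right_mono) auto
    thus ?thesis using nd_eq by simp
  qed
  have nd_rho: "nd < \<rho>" using nd_q qrho by simp
  have xball: "x \<in> ball xd \<rho>" using nd_rho unfolding nd_def d_def by (simp add: dist_norm norm_minus_commute)
  have ballx: "ball x (\<rho> - nd) \<subseteq> D"
  proof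
    fix z assume "z \<in> ball x (\<rho> - nd)"
    hence "dist xd z < \<rho>" using dist_triangle[of xd z x] xball unfolding nd_def d_def
      by (simp add: dist_norm norm_minus_commute)
    thus "z \<in> D" using bD by auto
  qed
  define r where "r = F x - yd"
  have opt: "\<And>h. F' x h \<bullet> r + \<alpha> * (h \<bullet> (x - xs)) = 0"
    unfolding r_def using tik_opt[OF tm _ ballx der[OF xball]] nd_rho by simp
  obtain R where FR: "F' x = A o\<^sub>L R" and nR: "norm (id_blinfun - R) \<le> \<kappa>0 * nd"
    using Rp[OF xball, of xd] rho unfolding A_def nd_def d_def by auto
  have Rh: "norm (R h - h) \<le> \<kappa>0 * nd * norm h" for h
    using R_bound[of R h] mult_right_mono[OF nR norm_ge_zero[of h]] by linarith
  have xxs: "x - xs = d + e" unfolding d_def e_def by simp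
  have kn: "\<kappa>0 * nd \<le> 1"
    using kq mult_left_mono[OF nd_q k0] by linarith
  have alpha_le: "\<alpha> \<le> C1 * lm"
  proof -
    have eq: "A (R e) \<bullet> r + \<alpha> * (e \<bullet> (d + e)) = 0" using opt[of e] FR xxs by simp
    have nRe: "norm (R e) \<le> 2 * E"
    proof -
      have "norm (R e) \<le> norm e + norm (R e - e)" by (metis norm_triangle_sub add.commute)
      also have "\<dots> \<le> E + \<kappa>0 * nd * E" using Rh[of e] unfolding E_def by simp
      also have "\<dots> \<le> 2 * E" using mult_right_mono[OF kn, of E] Epos by simp
      finally show ?thesis .
    qed
    have "\<bar>A (R e) \<bullet> r\<bar> \<le> norm (A (R e)) * norm r" by (rule abs_inner_le)
    also have "\<dots> \<le> (a * norm (R e)) * norm r" unfolding a_def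
      by (intro mult_right_mono norm_blinfun) simp
    also have "\<dots> \<le> (a * (2 * E)) * (\<tau> * lm)" using res nRe a0 Epos unfolding r_def
      by (intro mult_mono mult_left_mono) auto
    finally have b1: "\<bar>A (R e) \<bullet> r\<bar> \<le> a * (2 * E) * (\<tau> * lm)" .
    have "e \<bullet> (d + e) = E * E + e \<bullet> d" unfolding E_def by (simp add: inner_add_right power2_norm_eq_inner[symmetric] power2_eq_square)
    moreover have "\<bar>e \<bullet> d\<bar> \<le> E * nd" unfolding E_def nd_def by (rule abs_inner_le)
    moreover have "E * nd \<le> E * (E / 2)" using nd_q qE Epos by (intro mult_left_mono) auto
    ultimately have "e \<bullet> (d + e) \<ge> E * E / 2" by linarith
    hence "\<alpha> * (E * E / 2) \<le> \<alpha> * (e \<bullet> (d + e))" using alpha0 by (intro mult_left_mono) auto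
    also have "\<dots> \<le> a * (2 * E) * (\<tau> * lm)" using eq b1 by linarith
    finally have "\<alpha> * (E * E / 2) \<le> a * (2 * E) * (\<tau> * lm)" .
    hence "\<alpha> * E \<le> 4 * a * \<tau> * lm" using Epos by (simp add: field_simps)
    thus ?thesis unfolding C1_def using Epos by (simp add: field_simps)
  qed

  define rh where "rh = F x - F xd - A d"
  have nrh: "norm rh \<le> nd * (a * \<kappa>0 * nd)"
  proof -
    have "norm (F x - F xd - F' xd (x - xd)) \<le> norm (x - xd) * (a * \<kappa>0 * nd)"
    proof (rule lin_bound[where \<rho> = \<rho>])
      show "norm (x - xd) < \<rho>" using nd_rho unfolding nd_def d_def .
      show "(F has_derivative blinfun_apply (F' z)) (at z)" if "z \<in> ball xd \<rho>" for z
        using der that .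
      show "norm (F' z - F' xd) \<le> a * \<kappa>0 * nd" if z: "z \<in> cball xd (norm (x - xd))" for z
      proof -
        have zb: "z \<in> ball xd \<rho>" using z nd_rho unfolding nd_def d_def by (simp add: dist_norm)
        have nz: "norm (z - xd) \<le> nd" using z unfolding nd_def d_def by (simp add: dist_norm norm_minus_commute)
        obtain Rz where FRz: "F' z = A o\<^sub>L Rz" and nRz: "norm (id_blinfun - Rz) \<le> \<kappa>0 * norm (z - xd)"
          using Rp[OF zb, of xd] rho unfolding A_def by auto
        have nRz2: "norm (id_blinfun - Rz) \<le> \<kappa>0 * nd" using nRz mult_left_mono[OF nz k0] by linarith
        show ?thesis unfolding A_def[symmetric]
        proof (rule norm_blinfun_bound)
          show "0 \<le> a * \<kappa>0 * nd" using a0 k0 nd0 by simp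
          fix h
          have "(F' z - A) h = A (Rz h - h)" using FRz by (simp add: minus_blinfun.rep_eq blinfun.diff_right)
          hence "norm ((F' z - A) h) \<le> a * norm (Rz h - h)" unfolding a_def by (simp add: norm_blinfun)
          also have "\<dots> \<le> a * (norm (id_blinfun - Rz) * norm h)" using R_bound a0 by (intro mult_left_mono) auto
          also have "\<dots> \<le> a * ((\<kappa>0 * nd) * norm h)" using nRz2 a0 by (intro mult_left_mono mult_right_mono) auto
          finally show "norm ((F' z - A) h) \<le> a * \<kappa>0 * nd * norm h" by (simp add: mult.assoc)
        qed
      qed
    qed
    thus ?thesis unfolding rh_def A_def d_def nd_def .
  qed
  have r_eq: "r = A d + rh - (s * lm) *\<^sub>R v" unfolding r_def rh_def yd_def using Fxd by simp
  have nr: "norm r \<le> \<tau> * lm" using res unfolding r_def .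
  define P1 where "P1 = d \<bullet> w"
  define P2 where "P2 = v \<bullet> rh"
  define P3 where "P3 = (T v - lm *\<^sub>R v) \<bullet> r"
  define P4 where "P4 = A (R w - w) \<bullet> r"
  define P5 where "P5 = w \<bullet> e"
  have i1: "A (R w) \<bullet> r = A w \<bullet> r + P4" unfolding P4_def
    by (simp add: blinfun.diff_right inner_diff_left)
  have i2: "A w \<bullet> r = lm * (v \<bullet> r) + P3" unfolding P3_def Tv[symmetric]
    by (simp add: inner_diff_left)
  have vAd: "v \<bullet> A d = P1" unfolding P1_def w_def using adj[of d v] by (simp add: inner_commute)
  have i3: "v \<bullet> r = P1 + P2 - s * lm" unfolding r_eq P2_def
    using v1 vAd by (simp add: inner_add_right inner_diff_right power2_norm_eq_inner[symmetric])
  have i4: "w \<bullet> (d + e) = P1 + P5" unfolding P1_def P5_def by (simp add: inner_add_right inner_commute)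
  have ident: "lm * P1 + lm * P2 - s * lm * lm + P3 + P4 + \<alpha> * P1 + \<alpha> * P5 = 0"
  proof -
    have "A (R w) \<bullet> r + \<alpha> * (w \<bullet> (d + e)) = 0" using opt[of w] FR xxs by simp
    thus ?thesis unfolding i1 i2 i3 i4 by (simp add: algebra_simps)
  qed
  have b1: "\<bar>P1\<bar> \<le> 2 * \<epsilon> * lm"
  proof -
    have "\<bar>P1\<bar> \<le> nd * norm w" unfolding P1_def nd_def by (rule abs_inner_le)
    also have "\<dots> \<le> (\<epsilon> * q) * (2 * q)" using nd_eq nw nd0 eps0 q0 by (intro mult_mono) auto
    also have "\<dots> = 2 * \<epsilon> * lm" using qq by (simp add: algebra_simps)
    finally show ?thesis .
  qed
  have b2: "\<bar>P2\<bar> \<le> K * \<epsilon> * lm"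
  proof -
    have "\<bar>P2\<bar> \<le> norm v * norm rh" unfolding P2_def by (rule abs_inner_le)
    also have "\<dots> \<le> nd * (a * \<kappa>0 * nd)" using v1 nrh by simp
    also have "\<dots> = K * (nd * nd)" unfolding K_def by (simp add: algebra_simps)
    also have "\<dots> \<le> K * ((\<epsilon> * q) * (\<epsilon> * q))" using nd_eq nd0 K0 by (intro mult_left_mono mult_mono) auto
    also have "\<dots> = K * (\<epsilon> * \<epsilon>) * lm" using qq by (simp add: algebra_simps)
    also have "\<dots> \<le> K * \<epsilon> * lm"
    proof -
      have "\<epsilon> * \<epsilon> \<le> \<epsilon> * 1" using eps0 eps1 by (intro mult_left_mono) auto
      thus ?thesis using K0 l0 by (intro mult_right_mono mult_left_mono) auto
    qed
    finally show ?thesis .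
  qed
  have b3: "\<bar>P3\<bar> \<le> \<eta> * (\<tau> * lm)"
  proof -
    have "\<bar>P3\<bar> \<le> \<eta> * norm r" unfolding P3_def \<eta>_def by (rule abs_inner_le)
    also have "\<dots> \<le> \<eta> * (\<tau> * lm)" using nr unfolding \<eta>_def by (intro mult_left_mono) auto
    finally show ?thesis .
  qed
  have b4: "\<bar>P4\<bar> \<le> 2 * a * \<kappa>0 * \<tau> * \<epsilon> * lm * lm"
  proof -
    have "\<bar>P4\<bar> \<le> norm (A (R w - w)) * norm r" unfolding P4_def by (rule abs_inner_le)
    also have "\<dots> \<le> (a * (\<kappa>0 * nd * norm w)) * (\<tau> * lm)"
    proof (rule mult_mono)
      have "norm (A (R w - w)) \<le> a * norm (R w - w)" unfolding a_def by (rule norm_blinfun)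
      also have "\<dots> \<le> a * (\<kappa>0 * nd * norm w)" using Rh[of w] a0 by (intro mult_left_mono) auto
      finally show "norm (A (R w - w)) \<le> a * (\<kappa>0 * nd * norm w)" .
    qed (use nr a0 k0 nd0 in auto)
    also have "\<dots> \<le> (a * (\<kappa>0 * (\<epsilon> * q) * (2 * q))) * (\<tau> * lm)"
    proof -
      have "nd * norm w \<le> (\<epsilon> * q) * (2 * q)" using nd_eq nw nd0 eps0 q0 by (intro mult_mono) auto
      hence "\<kappa>0 * nd * norm w \<le> \<kappa>0 * (\<epsilon> * q) * (2 * q)" using k0
        by (metis mult.assoc mult_left_mono)
      thus ?thesis using a0 assms(7) l0 by (intro mult_right_mono mult_left_mono) auto
    qed
    also have "\<dots> = 2 * a * \<kappa>0 * \<tau> * \<epsilon> * lm * lm" using qq by (simp add: algebra_simps)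
    finally show ?thesis .
  qed
  have b5: "\<alpha> * \<bar>P1\<bar> \<le> C1 * lm * (2 * \<epsilon> * lm)"
    using alpha_le b1 alpha0 by (intro mult_mono) auto
  have sP5: "s * (\<alpha> * P5) \<le> 0"
  proof -
    have "s * (\<alpha> * P5) = \<alpha> * (s * P5)" by simp
    also have "\<dots> \<le> 0" using alpha0 swe unfolding P5_def by (simp add: mult_nonneg_nonpos)
    finally show ?thesis .
  qed
  have sabs: "s * X \<le> \<bar>X\<bar>" for X unfolding s_def by auto
  have main: "lm * lm = s * (lm * P1) + s * (lm * P2) + s * P3 + s * P4 + s * (\<alpha> * P1) + s * (\<alpha> * P5)"
  proof -
    have "s * (lm * P1 + lm * P2 - s * lm * lm + P3 + P4 + \<alpha> * P1 + \<alpha> * P5) = 0" using ident by simp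
    thus ?thesis using s2 by (simp add: algebra_simps)
  qed
  have t1: "s * (lm * P1) \<le> lm * (2 * \<epsilon> * lm)"
    using sabs[of "lm * P1"] mult_left_mono[OF b1, of lm] l0 by (simp add: abs_mult)
  have t2: "s * (lm * P2) \<le> lm * (K * \<epsilon> * lm)"
    using sabs[of "lm * P2"] mult_left_mono[OF b2, of lm] l0 by (simp add: abs_mult)
  have t3: "s * P3 \<le> \<eta> * (\<tau> * lm)" using sabs[of P3] b3 by linarith
  have t4: "s * P4 \<le> 2 * a * \<kappa>0 * \<tau> * \<epsilon> * lm * lm" using sabs[of P4] b4 by linarith
  have t5: "s * (\<alpha> * P1) \<le> C1 * lm * (2 * \<epsilon> * lm)"
  proof -
    have "\<alpha> * (s * P1) \<le> \<alpha> * \<bar>P1\<bar>" using sabs[of P1] alpha0 by (intro mult_left_mono) auto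
    hence "s * (\<alpha> * P1) \<le> \<alpha> * \<bar>P1\<bar>" by (simp add: mult.left_commute)
    thus ?thesis using b5 by linarith
  qed
  have sumeq: "lm * (2 * \<epsilon> * lm) + lm * (K * \<epsilon> * lm) + 2 * a * \<kappa>0 * \<tau> * \<epsilon> * lm * lm
      + C1 * lm * (2 * \<epsilon> * lm) = (\<epsilon> * M) * (lm * lm)"
    unfolding M_def by (simp add: algebra_simps)
  have em: "(\<epsilon> * M) * (lm * lm) \<le> (1/2) * (lm * lm)"
    using epsM l0 by (intro mult_right_mono) auto
  have et: "\<eta> * (\<tau> * lm) < (lm / 2) * lm"
  proof -
    have "\<eta> * (\<tau> * lm) = (\<eta> * \<tau>) * lm" by simp
    also have "\<dots> < (lm / 2) * lm" using eta_tau l0 by (intro mult_strict_right_mono) auto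
    finally show ?thesis .
  qed
  show False using main t1 t2 t3 t4 t5 sP5 sumeq em et by linarith
qed


end
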